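(* Fix $\alpha>1$, a Pufferfish scenario $(\mathcal S,\mathcal Q,\Theta)$ and a slice profile $(\mathcal U,\omega)$. If a mechanism $\mathcal M$ satisfies $(\alpha,\epsilon,\omega)$-Joint-SRPP in $(\mathcal S,\mathcal Q,\Theta)$, then for any $\delta\in(0,1)$ it satisfies $(\epsilon',\delta,\omega)$-Joint-SPP in $(\mathcal S,\mathcal Q,\Theta)$ with $\epsilon'=\epsilon+\frac{\log(1/\delta)}{\alpha-1}$.
   Context: Pufferfish scenario: secrets $\mathcal S$, pairs $\mathcal Q\subseteq\mathcal S\times\mathcal S$, priors $\Theta$, each a joint law of secret $S$ and dataset $X$ with secret marginal $P^S_\theta$; $\mathcal M^\theta_s$ is the law of $\mathcal M(X)\in\mathbb R^d$ given $S=s$ under $\theta$. Slice profile: $\mathcal U\subseteq\mathbb S^{d-1}$, $\omega$ a probability measure on the unit sphere supported on $\mathcal U$; $\Psi^u(a)=\langle a,u\rangle$, $\Psi^u_\#$ pushforward. $\mathtt D_\alpha$ is R\'enyi divergence. $\mathcal M$ is $(\alpha,\epsilon,\omega)$-Joint-SRPP if $\frac1{\alpha-1}\log\int\exp((\alpha-1)\mathtt D_\alpha(\Psi^u_\#\mathcal M^\theta_{s_i}\|\Psi^u_\#\mathcal M^\theta_{s_j}))\,d\omega(u)\le\epsilon$ for all $\theta\in\Theta$ and $(s_i,s_j)\in\mathcal Q$ with $P^S_\theta(s_i),P^S_\theta(s_j)>0$. Joint-SPP: let $V\sim\omega$ be independent of $X$ and of the internal randomness of $\mathcal M$, and $\widetilde{\mathcal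 M}(X)=(V,\Psi^V(\mathcal M(X)))$. $\mathcal M$ is $(\varepsilon,\delta,\omega)$-Joint-SPP if for all such $\theta$, $(s_i,s_j)$ and measurable $A$, $\Pr(\widetilde{\mathcal M}(X)\in A\mid s_i,\theta)\le e^\varepsilon\Pr(\widetilde{\mathcal M}(X)\in A\mid s_j,\theta)+\delta$. *)

theory Defs
  imports "HOL-Probability.Probability"
begin

(* Renyi divergence D_alpha(P || Q) for alpha > 1 (the only case used):
   (1/(alpha-1)) log \<integral> (dP/dQ)^alpha dQ if P << Q, and +infinity otherwise
   (also +infinity if the integral diverges). *)
definition renyi_div :: "real \<Rightarrow> 'b measure \<Rightarrow> 'b measure \<Rightarrow> ereal" where
  "renyi_div \<alpha> P Q =
     (let I = (\<integral>\<^sup>+ x. ennreal (enn2real (RN_deriv Q P x) powr \<alpha>) \<partial>Q) in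
      if absolutely_continuous Q P \<and> I < \<infinity>
      then ereal (ln (enn2real I) / (\<alpha> - 1)) else \<infinity>)"

definition exp_scaled :: "real \<Rightarrow> ereal \<Rightarrow> ennreal" where
  "exp_scaled \<alpha> D = (if D = \<infinity> then \<infinity> else ennreal (exp ((\<alpha> - 1) * real_of_ereal D)))"

definition slice_push :: "'a::euclidean_space \<Rightarrow> 'a measure \<Rightarrow> real measure" where
  "slice_push u \<mu> = distr \<mu> borel (\<lambda>a. a \<bullet> u)"

(* A prior theta is a joint law of (S, X) on (secrets x datasets).
   P^S_theta(s) = Pr(S = s) under theta. *)
definition secret_prob :: "('s \<times> 'x) measure \<Rightarrow> 's \<Rightarrow> real" where
  "secret_prob \<theta> s = measure \<theta> {z \<in> space \<theta>. fst z = s}"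

(* M^theta_s: law of M(X) given S = s under theta; M is a Markov kernel from
   datasets to output distributions (capturing the internal randomness). *)
definition cond_out :: "('s \<times> 'x) measure \<Rightarrow> ('x \<Rightarrow> 'a measure) \<Rightarrow> 's \<Rightarrow> 'a measure" where
  "cond_out \<theta> M s = bind (uniform_measure \<theta> {z \<in> space \<theta>. fst z = s}) (\<lambda>z. M (snd z))"

(* Law of tilde M(X) = (V, Psi^V(M(X))) given S = s, V ~ omega independent of X and of
   the internal randomness of M. *)
definition sliced_out :: "'a::euclidean_space measure \<Rightarrow> ('s \<times> 'x) measure \<Rightarrow> ('x \<Rightarrow> 'a measure)
     \<Rightarrow> 's \<Rightarrow> ('a \<times> real) measure" where
  "sliced_out \<omega> \<theta> M s = distr (\<omega> \<Otimes>\<^sub>M cond_out \<theta> M s) borel (\<lambda>(u, y). (u, y \<bullet> u))"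

definition joint_SRPP :: "real \<Rightarrow> real \<Rightarrow> 'a::euclidean_space measure \<Rightarrow> ('s \<times> 'x) measure set
     \<Rightarrow> ('s \<times> 's) set \<Rightarrow> ('x \<Rightarrow> 'a measure) \<Rightarrow> bool" where
  "joint_SRPP \<alpha> \<epsilon> \<omega> \<Theta> Q M \<longleftrightarrow>
     (\<forall>\<theta>\<in>\<Theta>. \<forall>(si, sj)\<in>Q. secret_prob \<theta> si > 0 \<and> secret_prob \<theta> sj > 0 \<longrightarrow>
        (let I = (\<integral>\<^sup>+ u. exp_scaled \<alpha>
                    (renyi_div \<alpha> (slice_push u (cond_out \<theta> M si)) (slice_push u (cond_out \<theta> M sj))) \<partial>\<omega>)
         in I < \<infinity> \<and> ln (enn2real I) / (\<alpha> - 1) \<le> \<epsilon>))"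

definition joint_SPP :: "real \<Rightarrow> real \<Rightarrow> 'a::euclidean_space measure \<Rightarrow> ('s \<times> 'x) measure set
     \<Rightarrow> ('s \<times> 's) set \<Rightarrow> ('x \<Rightarrow> 'a measure) \<Rightarrow> bool" where
  "joint_SPP \<epsilon> \<delta> \<omega> \<Theta> Q M \<longleftrightarrow>
     (\<forall>\<theta>\<in>\<Theta>. \<forall>(si, sj)\<in>Q. secret_prob \<theta> si > 0 \<and> secret_prob \<theta> sj > 0 \<longrightarrow>
        (\<forall>A \<in> sets (borel :: ('a \<times> real) measure).
           measure (sliced_out \<omega> \<theta> M si) A \<le> exp \<epsilon> * measure (sliced_out \<omega> \<theta> M sj) A + \<delta>))"

end

theory Submission
  imports Defs
begin

lemma young_aux:
  fixes \<alpha> K g :: real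
  assumes a: "\<alpha> > 1" and K: "K > 0" and g: "g \<ge> 0"
  shows "g \<le> g powr \<alpha> / (\<alpha> * K powr (\<alpha> - 1)) + K * (\<alpha> - 1) / \<alpha>"
proof (cases "g = 0")
  case True thus ?thesis using a K by simp
next
  case False
  hence gp: "g > 0" using g by simp
  let ?a = "g powr \<alpha> / K powr (\<alpha> - 1)"
  have "?a powr (1/\<alpha>) * K powr (1 - 1/\<alpha>) \<le> (1/\<alpha>) * ?a + (1 - 1/\<alpha>) * K"
    by (rule Youngs_inequality_0) (use a K gp in auto)
  moreover have "?a powr (1/\<alpha>) * K powr (1 - 1/\<alpha>) = g"
  proof -
    have "?a powr (1/\<alpha>) = g / K powr ((\<alpha>-1)/\<alpha>)"
      using a K gp by (simp add: powr_divide powr_powr)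
    moreover have "(\<alpha>-1)/\<alpha> = 1 - 1/\<alpha>" using a by (simp add: field_simps)
    ultimately show ?thesis using K by simp
  qed
  moreover have "(1/\<alpha>) * ?a + (1 - 1/\<alpha>) * K = g powr \<alpha> / (\<alpha> * K powr (\<alpha> - 1)) + K * (\<alpha> - 1) / \<alpha>"
    using a by (simp add: field_simps)
  ultimately show ?thesis by simp
qed


lemma per_slice:
  fixes P Q :: "'b measure" and \<alpha> K :: real
  assumes a: "\<alpha> > 1" and K: "K > 0"
    and P: "prob_space P" and Q: "prob_space Q" and sPQ: "sets P = sets Q"
    and B: "B \<in> sets Q"
  shows "emeasure P B \<le> ennreal (1 / (\<alpha> * K powr (\<alpha> - 1))) * exp_scaled \<alpha> (renyi_div \<alpha> P Q)
           + ennreal (K * (\<alpha> - 1) / \<alpha>) * emeasure Q B"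
proof -
  interpret P: prob_space P by fact
  interpret Q: prob_space Q by fact
  define c1 where "c1 = 1 / (\<alpha> * K powr (\<alpha> - 1))"
  define c2 where "c2 = K * (\<alpha> - 1) / \<alpha>"
  have c1: "c1 > 0" unfolding c1_def using a K by simp
  have c2: "c2 \<ge> 0" unfolding c2_def using a K by simp
  define f where "f = RN_deriv Q P"
  define I where "I = (\<integral>\<^sup>+ x. ennreal (enn2real (f x) powr \<alpha>) \<partial>Q)"
  show ?thesis
  proof (cases "absolutely_continuous Q P \<and> I < \<infinity>")
    case False
    hence "renyi_div \<alpha> P Q = \<infinity>" unfolding renyi_div_def I_def f_def Let_def by auto
    hence "exp_scaled \<alpha> (renyi_div \<alpha> P Q) = \<infinity>" unfolding exp_scaled_def by simp
    thus ?thesis using c1 by (simp add: c1_def[symmetric] ennreal_mult_top)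
  next
    case True
    hence ac: "absolutely_continuous Q P" and If: "I < \<infinity>" by auto
    have ren: "renyi_div \<alpha> P Q = ereal (ln (enn2real I) / (\<alpha> - 1))"
      unfolding renyi_div_def I_def f_def Let_def using True by (auto simp: I_def f_def)
    have IX: "I \<le> exp_scaled \<alpha> (renyi_div \<alpha> P Q)"
    proof (cases "enn2real I > 0")
      case True
      have "exp_scaled \<alpha> (renyi_div \<alpha> P Q) = ennreal (enn2real I)"
        unfolding ren exp_scaled_def using a True by simp
      thus ?thesis using If by simp
    next
      case False
      hence "I = 0" using If enn2real_nonneg[of I] by (auto simp: enn2real_eq_0_iff less_le)
      thus ?thesis by simp
    qed
    have dens: "density Q f = P"
      unfolding f_def by (rule Q.density_RN_deriv[OF ac sPQ])
    have fm: "f \<in> borel_measurable Q" unfolding f_def by simp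
    have fin: "AE x in Q. f x \<noteq> \<infinity>"
      unfolding f_def by (rule Q.RN_deriv_finite[OF _ ac sPQ]) (simp add: P.sigma_finite_measure_axioms)
    have "emeasure P B = (\<integral>\<^sup>+ x\<in>B. f x \<partial>Q)"
      using B by (simp add: dens[symmetric] emeasure_density fm)
    also have "\<dots> \<le> (\<integral>\<^sup>+ x. ennreal c1 * ennreal (enn2real (f x) powr \<alpha>) + ennreal c2 * indicator B x \<partial>Q)"
    proof (rule nn_integral_mono_AE)
      show "AE x in Q. f x * indicator B x \<le> ennreal c1 * ennreal (enn2real (f x) powr \<alpha>) + ennreal c2 * indicator B x"
        using fin
      proof eventually_elim
        case (elim x)
        let ?g = "enn2real (f x)"
        have fx: "f x = ennreal ?g" using elim by (cases "f x") auto
        have y: "?g \<le> c1 * ?g powr \<alpha> + c2"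
          using young_aux[OF a K, of ?g] unfolding c1_def c2_def by simp
        show ?case
        proof (cases "x \<in> B")
          case True
          have "f x \<le> ennreal (c1 * ?g powr \<alpha> + c2)" by (subst fx) (rule ennreal_leI[OF y])
          also have "\<dots> = ennreal c1 * ennreal (?g powr \<alpha>) + ennreal c2"
            using c1 c2 by (simp add: ennreal_plus ennreal_mult)
          finally show ?thesis using True by simp
        qed simp
      qed
    qed
    also have "\<dots> = ennreal c1 * I + ennreal c2 * emeasure Q B"
      using B fm by (simp add: nn_integral_add nn_integral_cmult I_def)
    also have "\<dots> \<le> ennreal c1 * exp_scaled \<alpha> (renyi_div \<alpha> P Q) + ennreal c2 * emeasure Q B"
      using IX by (intro add_mono mult_left_mono) auto
    finally show ?thesis unfolding c1_def c2_def .
  qed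
qed


lemma cond_out_prob:
  assumes th: "prob_space \<theta>" and sth: "sets \<theta> = sets (count_space S \<Otimes>\<^sub>M Xsp)"
    and M: "M \<in> Xsp \<rightarrow>\<^sub>M prob_algebra borel" and pos: "secret_prob \<theta> s > 0"
  shows "prob_space (cond_out \<theta> M s)" "sets (cond_out \<theta> M s) = sets borel"
proof -
  interpret prob_space \<theta> by fact
  let ?B = "{z \<in> space \<theta>. fst z = s}"
  have "emeasure \<theta> ?B \<noteq> 0" using pos unfolding secret_prob_def
    by (auto simp: measure_def)
  moreover have "emeasure \<theta> ?B \<noteq> \<infinity>" by simp
  ultimately have up: "prob_space (uniform_measure \<theta> ?B)" by (rule prob_space_uniform_measure)
  have A: "uniform_measure \<theta> ?B \<in> space (prob_algebra \<theta>)"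
    using up by (simp add: space_prob_algebra)
  have sn: "snd \<in> \<theta> \<rightarrow>\<^sub>M Xsp"
    using measurable_snd[of "count_space S" Xsp] by (simp add: measurable_cong_sets[OF sth refl])
  have K: "(\<lambda>z. M (snd z)) \<in> \<theta> \<rightarrow>\<^sub>M prob_algebra borel"
    by (rule measurable_compose[OF sn M])
  show "prob_space (cond_out \<theta> M s)" unfolding cond_out_def by (rule prob_space_bind'[OF A K])
  show "sets (cond_out \<theta> M s) = sets borel" unfolding cond_out_def by (rule sets_bind'[OF A K])
qed


lemma slice_rep:
  fixes \<omega> P :: "'a::euclidean_space measure" and A :: "('a \<times> real) set"
  assumes w: "prob_space \<omega>" "sets \<omega> = sets borel"
    and P: "prob_space P" "sets P = sets borel"
    and A: "A \<in> sets borel"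
  shows "emeasure (distr (\<omega> \<Otimes>\<^sub>M P) borel (\<lambda>(u, y). (u, y \<bullet> u))) A
           = (\<integral>\<^sup>+ u. emeasure (slice_push u P) (Pair u -` A) \<partial>\<omega>)"
    and "(\<lambda>u. emeasure (slice_push u P) (Pair u -` A)) \<in> borel_measurable \<omega>"
proof -
  interpret P: prob_space P by fact
  let ?phi = "\<lambda>(u::'a, y::'a). (u, y \<bullet> u)"
  have sp: "sets (\<omega> \<Otimes>\<^sub>M P) = sets (borel :: ('a \<times> 'a) measure)"
    using w P by (simp add: borel_prod[symmetric] cong: sets_pair_measure_cong)
  have phim: "?phi \<in> (\<omega> \<Otimes>\<^sub>M P) \<rightarrow>\<^sub>M borel"
    unfolding measurable_cong_sets[OF sp refl]
    by (intro borel_measurable_continuous_onI continuous_intros) (auto simp: case_prod_beta intro!: continuous_intros)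
  have spc: "space (\<omega> \<Otimes>\<^sub>M P) = UNIV" using sets_eq_imp_space_eq[OF sp] by simp
  have spP: "space P = UNIV" using sets_eq_imp_space_eq[OF P(2)] by simp
  let ?X = "?phi -` A \<inter> space (\<omega> \<Otimes>\<^sub>M P)"
  have X: "?X \<in> sets (\<omega> \<Otimes>\<^sub>M P)" using phim A by (rule measurable_sets)
  have A': "A \<in> sets ((borel::'a measure) \<Otimes>\<^sub>M (borel::real measure))" using A by (simp only: borel_prod)
  have eq: "emeasure P (Pair u -` ?X) = emeasure (slice_push u P) (Pair u -` A)" for u
  proof -
    have "Pair u -` A \<in> sets borel" using A' by (rule sets_Pair1)
    hence "emeasure (slice_push u P) (Pair u -` A) = emeasure P ((\<lambda>a. a \<bullet> u) -` (Pair u -` A) \<inter> space P)"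
      unfolding slice_push_def using P(2)
      by (intro emeasure_distr) (auto simp: measurable_cong_sets[OF P(2) refl])
    also have "(\<lambda>a. a \<bullet> u) -` (Pair u -` A) \<inter> space P = Pair u -` ?X" using spP spc by auto
    finally show ?thesis by simp
  qed
  have "emeasure (distr (\<omega> \<Otimes>\<^sub>M P) borel ?phi) A = emeasure (\<omega> \<Otimes>\<^sub>M P) ?X"
    by (rule emeasure_distr[OF phim A])
  also have "\<dots> = (\<integral>\<^sup>+ u. emeasure P (Pair u -` ?X) \<partial>\<omega>)"
    by (rule P.emeasure_pair_measure_alt[OF X])
  finally show "emeasure (distr (\<omega> \<Otimes>\<^sub>M P) borel ?phi) A
           = (\<integral>\<^sup>+ u. emeasure (slice_push u P) (Pair u -` A) \<partial>\<omega>)" by (simp only: eq)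
  show "(\<lambda>u. emeasure (slice_push u P) (Pair u -` A)) \<in> borel_measurable \<omega>"
    using P.measurable_emeasure_Pair[OF X] by (simp only: eq)
qed


lemma mix:
  fixes p q X :: ennreal and c1 c2 :: real
  assumes c1: "c1 > 0" and c2: "c2 \<ge> 0" and p: "p \<noteq> \<infinity>" and q: "q \<noteq> \<infinity>"
    and le: "p \<le> ennreal c1 * X + ennreal c2 * q"
  shows "p \<le> ennreal c1 * ennreal ((enn2real p - c2 * enn2real q) / c1) + ennreal c2 * q"
    and "ennreal ((enn2real p - c2 * enn2real q) / c1) \<le> X"
proof -
  obtain pr where pr: "p = ennreal pr" "pr \<ge> 0" using p by (cases p) auto
  obtain qr where qr: "q = ennreal qr" "qr \<ge> 0" using q by (cases q) auto
  have ep: "enn2real p = pr" "enn2real q = qr" using pr qr by auto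
  show "p \<le> ennreal c1 * ennreal ((enn2real p - c2 * enn2real q) / c1) + ennreal c2 * q"
  proof (cases "pr - c2 * qr \<le> 0")
    case True
    hence "pr \<le> c2 * qr" by simp
    hence "ennreal pr \<le> ennreal c2 * ennreal qr" using c2 qr by (metis ennreal_leI ennreal_mult)
    thus ?thesis using pr qr by (simp add: add_increasing)
  next
    case False
    have "ennreal c1 * ennreal ((pr - c2 * qr) / c1) + ennreal c2 * ennreal qr
          = ennreal (c1 * ((pr - c2 * qr) / c1) + c2 * qr)"
      using False c1 c2 qr ennreal_mult[of c1 "(pr - c2 * qr) / c1"] ennreal_mult[of c2 qr]
        ennreal_plus[of "c1 * ((pr - c2 * qr) / c1)" "c2 * qr"] by simp
    also have "c1 * ((pr - c2 * qr) / c1) + c2 * qr = pr" using c1 by simp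
    finally show ?thesis using pr qr ep by simp
  qed
  show "ennreal ((enn2real p - c2 * enn2real q) / c1) \<le> X"
  proof (cases "X = \<infinity>")
    case True thus ?thesis by simp
  next
    case False
    then obtain xr where xr: "X = ennreal xr" "xr \<ge> 0" by (cases X) auto
    have "ennreal pr \<le> ennreal (c1 * xr + c2 * qr)"
      using le pr qr xr c1 c2 ennreal_mult[of c1 xr] ennreal_mult[of c2 qr] ennreal_plus[of "c1 * xr" "c2 * qr"] by simp
    moreover have "0 \<le> c1 * xr + c2 * qr" using c1 c2 xr qr by simp
    ultimately have "pr \<le> c1 * xr + c2 * qr" using ennreal_le_iff by blast
    hence "(pr - c2 * qr) / c1 \<le> xr" using c1 by (simp add: field_simps)
    thus ?thesis using xr ep by (simp add: ennreal_leI)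
  qed
qed


theorem theorem9:
  fixes \<alpha> \<epsilon> \<delta> :: real
    and \<S> :: "'s set" and Q :: "('s \<times> 's) set"
    and Xsp :: "'x measure" and \<Theta> :: "('s \<times> 'x) measure set"
    and U :: "'a::euclidean_space set" and \<omega> :: "'a measure"
    and M :: "'x \<Rightarrow> 'a measure"
  assumes "\<alpha> > 1"
    and "Q \<subseteq> \<S> \<times> \<S>"
    and "\<forall>\<theta>\<in>\<Theta>. prob_space \<theta> \<and> sets \<theta> = sets (count_space \<S> \<Otimes>\<^sub>M Xsp)"
    and "U \<subseteq> sphere 0 1" and "U \<in> sets borel"
    and "prob_space \<omega>" and "sets \<omega> = sets borel" and "emeasure \<omega> U = 1"
    and "M \<in> Xsp \<rightarrow>\<^sub>M prob_algebra borel"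
    and "joint_SRPP \<alpha> \<epsilon> \<omega> \<Theta> Q M"
    and "0 < \<delta>" and "\<delta> < 1"
  shows "joint_SPP (\<epsilon> + ln (1 / \<delta>) / (\<alpha> - 1)) \<delta> \<omega> \<Theta> Q M"
proof -
  note a = assms(1)
  interpret w: prob_space \<omega> by fact
  define K where "K = exp (\<epsilon> + ln (1 / \<delta>) / (\<alpha> - 1))"
  define E where "E = exp ((\<alpha> - 1) * \<epsilon>)"
  define c1 where "c1 = 1 / (\<alpha> * K powr (\<alpha> - 1))"
  define c2 where "c2 = K * (\<alpha> - 1) / \<alpha>"
  have Kp: "K > 0" unfolding K_def by simp
  have c1: "c1 > 0" unfolding c1_def using a Kp by simp
  have c2: "c2 \<ge> 0" unfolding c2_def using a Kp by simp
  have c2K: "c2 \<le> K" unfolding c2_def using a Kp by (simp add: field_simps)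
  have KE: "K powr (\<alpha> - 1) = E / \<delta>"
  proof -
    have "K powr (\<alpha> - 1) = exp ((\<alpha> - 1) * (\<epsilon> + ln (1 / \<delta>) / (\<alpha> - 1)))"
      unfolding K_def by (simp add: powr_def)
    also have "(\<alpha> - 1) * (\<epsilon> + ln (1 / \<delta>) / (\<alpha> - 1)) = (\<alpha> - 1) * \<epsilon> + ln (1 / \<delta>)"
      using a by (simp add: field_simps)
    also have "exp \<dots> = E / \<delta>" unfolding E_def using assms(11) by (simp add: exp_add)
    finally show ?thesis .
  qed
  have c1E: "c1 * E \<le> \<delta>"
  proof -
    have Ep: "E > 0" unfolding E_def by simp
    have "c1 * E = \<delta> / \<alpha>" unfolding c1_def KE using Ep assms(11) a by (simp add: field_simps)
    also have "\<dots> \<le> \<delta>" using a assms(11) by (simp add: field_simps)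
    finally show ?thesis .
  qed
  show ?thesis unfolding joint_SPP_def
  proof (intro ballI impI, clarify)
    fix \<theta> si sj and A :: "('a \<times> real) set"
    assume th: "\<theta> \<in> \<Theta>" and sQ: "(si, sj) \<in> Q" and pi: "0 < secret_prob \<theta> si"
      and pj: "0 < secret_prob \<theta> sj" and A: "A \<in> sets borel"
    have thp: "prob_space \<theta>" and sth: "sets \<theta> = sets (count_space \<S> \<Otimes>\<^sub>M Xsp)"
      using assms(3) th by auto
    define Pi where "Pi = cond_out \<theta> M si"
    define Pj where "Pj = cond_out \<theta> M sj"
    have Pi: "prob_space Pi" "sets Pi = sets borel"
      unfolding Pi_def using cond_out_prob[OF thp sth assms(9) pi] by auto
    have Pj: "prob_space Pj" "sets Pj = sets borel"
      unfolding Pj_def using cond_out_prob[OF thp sth assms(9) pj] by auto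
    define X where "X = (\<lambda>u. exp_scaled \<alpha> (renyi_div \<alpha> (slice_push u Pi) (slice_push u Pj)))"
    define I where "I = (\<integral>\<^sup>+ u. X u \<partial>\<omega>)"
    have IS: "I < \<infinity> \<and> ln (enn2real I) / (\<alpha> - 1) \<le> \<epsilon>"
      using assms(10) th sQ pi pj unfolding joint_SRPP_def I_def X_def Pi_def Pj_def Let_def by auto
    have IE: "I \<le> ennreal E"
    proof (cases "enn2real I > 0")
      case True
      have "ln (enn2real I) \<le> (\<alpha> - 1) * \<epsilon>" using IS a by (simp add: field_simps)
      hence "exp (ln (enn2real I)) \<le> E" unfolding E_def by simp
      hence "enn2real I \<le> E" using True by simp
      moreover have "I = ennreal (enn2real I)" using IS by simp
      ultimately show ?thesis by (metis ennreal_leI)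
    next
      case False
      hence "I = 0" using IS enn2real_nonneg[of I] by (auto simp: enn2real_eq_0_iff less_le)
      thus ?thesis by simp
    qed
    define p where "p = (\<lambda>u. emeasure (slice_push u Pi) (Pair u -` A))"
    define q where "q = (\<lambda>u. emeasure (slice_push u Pj) (Pair u -` A))"
    note ri = slice_rep[OF assms(6,7) Pi A] and rj = slice_rep[OF assms(6,7) Pj A]
    have pm: "p \<in> borel_measurable \<omega>" unfolding p_def by (rule ri(2))
    have qm: "q \<in> borel_measurable \<omega>" unfolding q_def by (rule rj(2))
    have slp: "prob_space (slice_push u P)" "sets (slice_push u P) = sets borel"
      if "prob_space P" "sets P = sets (borel :: 'a measure)" for u P
    proof -
      interpret prob_space P by fact
      show "prob_space (slice_push u P)" unfolding slice_push_def
        by (rule prob_space_distr) (simp add: measurable_cong_sets[OF that(2) refl])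
    qed (simp add: slice_push_def)
    have Bm: "Pair u -` A \<in> sets (borel :: real measure)" for u
    proof -
      have "A \<in> sets ((borel::'a measure) \<Otimes>\<^sub>M (borel::real measure))" using A by (simp only: borel_prod)
      thus ?thesis by (rule sets_Pair1)
    qed
    have pfin: "p u \<noteq> \<infinity>" for u
      unfolding p_def using prob_space.emeasure_le_1[OF slp(1)[OF Pi], of u "Pair u -` A"] by (auto simp: top_unique)
    have qfin: "q u \<noteq> \<infinity>" for u
      unfolding q_def using prob_space.emeasure_le_1[OF slp(1)[OF Pj], of u "Pair u -` A"] by (auto simp: top_unique)
    have ps: "p u \<le> ennreal c1 * X u + ennreal c2 * q u" for u
      unfolding p_def q_def X_def c1_def c2_def
      by (rule per_slice[OF a Kp slp(1)[OF Pi] slp(1)[OF Pj]]) (auto simp: slp(2)[OF Pi] slp(2)[OF Pj] Bm)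
    define m where "m = (\<lambda>u. ennreal ((enn2real (p u) - c2 * enn2real (q u)) / c1))"
    have mm: "m \<in> borel_measurable \<omega>" unfolding m_def using pm qm by measurable
    have m1: "p u \<le> ennreal c1 * m u + ennreal c2 * q u" for u
      unfolding m_def by (rule mix(1)[OF c1 c2 pfin qfin ps])
    have m2: "m u \<le> X u" for u
      unfolding m_def by (rule mix(2)[OF c1 c2 pfin qfin ps])
    let ?phi = "\<lambda>(u::'a, y::'a). (u, y \<bullet> u)"
    have "emeasure (sliced_out \<omega> \<theta> M si) A = (\<integral>\<^sup>+ u. p u \<partial>\<omega>)"
      unfolding sliced_out_def Pi_def[symmetric] p_def by (rule ri(1))
    also have "\<dots> \<le> (\<integral>\<^sup>+ u. ennreal c1 * m u + ennreal c2 * q u \<partial>\<omega>)"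
      by (intro nn_integral_mono m1)
    also have "\<dots> = ennreal c1 * (\<integral>\<^sup>+ u. m u \<partial>\<omega>) + ennreal c2 * (\<integral>\<^sup>+ u. q u \<partial>\<omega>)"
      using mm qm by (simp add: nn_integral_add nn_integral_cmult)
    also have "\<dots> \<le> ennreal c1 * ennreal E + ennreal K * (\<integral>\<^sup>+ u. q u \<partial>\<omega>)"
    proof (intro add_mono mult_mono)
      have "(\<integral>\<^sup>+ u. m u \<partial>\<omega>) \<le> I" unfolding I_def by (intro nn_integral_mono m2)
      thus "(\<integral>\<^sup>+ u. m u \<partial>\<omega>) \<le> ennreal E" using IE by simp
    qed (use c2K in \<open>auto intro: ennreal_leI\<close>)
    also have "(\<integral>\<^sup>+ u. q u \<partial>\<omega>) = emeasure (sliced_out \<omega> \<theta> M sj) A"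
      unfolding sliced_out_def Pj_def[symmetric] q_def by (rule rj(1)[symmetric])
    finally have main: "emeasure (sliced_out \<omega> \<theta> M si) A
        \<le> ennreal c1 * ennreal E + ennreal K * emeasure (sliced_out \<omega> \<theta> M sj) A" .
    have sop: "prob_space (sliced_out \<omega> \<theta> M s)" if "prob_space (cond_out \<theta> M s)" "sets (cond_out \<theta> M s) = sets borel" for s
    proof -
      interpret pair_prob_space \<omega> "cond_out \<theta> M s"
        by (intro pair_prob_space.intro pair_sigma_finite.intro assms(6) that(1) prob_space_imp_sigma_finite)
      have sp: "sets (\<omega> \<Otimes>\<^sub>M cond_out \<theta> M s) = sets (borel :: ('a \<times> 'a) measure)"
        using sets_pair_measure_cong[OF assms(7) that(2)] by (simp only: borel_prod)
      have phim: "?phi \<in> (\<omega> \<Otimes>\<^sub>M cond_out \<theta> M s) \<rightarrow>\<^sub>M borel"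
        unfolding measurable_cong_sets[OF sp refl]
        by (intro borel_measurable_continuous_onI continuous_intros) (auto simp: case_prod_beta intro!: continuous_intros)
      show ?thesis unfolding sliced_out_def
        by (rule P.prob_space_distr[OF phim])
    qed
    show "measure (sliced_out \<omega> \<theta> M si) A
          \<le> exp (\<epsilon> + ln (1 / \<delta>) / (\<alpha> - 1)) * measure (sliced_out \<omega> \<theta> M sj) A + \<delta>"
    proof -
      interpret Ji: prob_space "sliced_out \<omega> \<theta> M si" by (rule sop[OF Pi[unfolded Pi_def]])
      interpret Jj: prob_space "sliced_out \<omega> \<theta> M sj" by (rule sop[OF Pj[unfolded Pj_def]])
      have ei: "emeasure (sliced_out \<omega> \<theta> M si) A = ennreal (measure (sliced_out \<omega> \<theta> M si) A)"
        by (rule Ji.emeasure_eq_measure)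
      have ej: "emeasure (sliced_out \<omega> \<theta> M sj) A = ennreal (measure (sliced_out \<omega> \<theta> M sj) A)"
        by (rule Jj.emeasure_eq_measure)
      define mi where "mi = measure (sliced_out \<omega> \<theta> M si) A"
      define mj where "mj = measure (sliced_out \<omega> \<theta> M sj) A"
      have mj0: "mj \<ge> 0" unfolding mj_def by simp
      have c1E0: "c1 * E \<ge> 0" using c1 unfolding E_def by simp
      have "ennreal mi \<le> ennreal (c1 * E) + ennreal K * ennreal mj"
        using main ei ej c1 unfolding mi_def mj_def E_def by (simp add: ennreal_mult)
      also have "\<dots> = ennreal (c1 * E + K * mj)"
        using c1E0 mj0 Kp ennreal_mult[of K mj] ennreal_plus[of "c1 * E" "K * mj"] by simp
      finally have "ennreal mi \<le> ennreal (c1 * E + K * mj)" .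
      moreover have "0 \<le> c1 * E + K * mj" using c1E0 mj0 Kp by simp
      ultimately have "mi \<le> c1 * E + K * mj" using ennreal_le_iff by blast
      thus ?thesis using c1E unfolding mi_def mj_def K_def by simp
    qed
  qed
qed

end
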